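(* Let $W$ be a weighing matrix of order $n$ and weight $k$ with $i$-th column $w_i$, and set $C_i=w_iw_i^T$ for $1\le i\le n$. Let $t\ge n$ and let $L=(l(i,j))_{i,j=1}^t$ be a Latin square of side $t$ on the symbol set $\{1,\dots,t\}$. If $t>n$, set $C_i=O$ (the $n\times n$ zero matrix) for $n+1\le i\le t$. Then the $tn\times tn$ block matrix $\widetilde W=(C_{l(i,j)})_{i,j=1}^t$, whose $(i,j)$ block is $C_{l(i,j)}$, is a weighing matrix of order $tn$ and weight $k^2$.
   Context: A weighing matrix of order $n$ and weight $k$ is an $n\times n$ matrix $W$ with entries in $\{1,-1,0\}$ such that $WW^T=kI_n$. A Latin square of side $t$ on symbol set $\{1,\dots,t\}$ is a $t\times t$ array in which each cell contains one symbol and each symbol occurs exactly once in each row and exactly once in each column. *)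

theory Defs
  imports Main
begin

text \<open>Matrices of order n are represented as functions nat \<Rightarrow> nat \<Rightarrow> int,
  with rows/columns indexed by 0..n-1 (entries outside the range are irrelevant).\<close>

definition weighing_matrix :: "nat \<Rightarrow> int \<Rightarrow> (nat \<Rightarrow> nat \<Rightarrow> int) \<Rightarrow> bool" where
  "weighing_matrix n k W \<longleftrightarrow>
     (\<forall>i<n. \<forall>j<n. W i j \<in> {-1, 0, 1}) \<and>
     (\<forall>i<n. \<forall>j<n. (\<Sum>l<n. W i l * W j l) = (if i = j then k else 0))"

definition latin_square :: "nat \<Rightarrow> (nat \<Rightarrow> nat \<Rightarrow> nat) \<Rightarrow> bool" where
  "latin_square t L \<longleftrightarrow>
     (\<forall>i<t. \<forall>j<t. L i j \<in> {1..t}) \<and>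
     (\<forall>i<t. \<forall>s\<in>{1..t}. \<exists>!j. j < t \<and> L i j = s) \<and>
     (\<forall>j<t. \<forall>s\<in>{1..t}. \<exists>!i. i < t \<and> L i j = s)"

definition col_outer :: "nat \<Rightarrow> (nat \<Rightarrow> nat \<Rightarrow> int) \<Rightarrow> nat \<Rightarrow> nat \<Rightarrow> nat \<Rightarrow> int" where
  "col_outer n W s a b = (if 1 \<le> s \<and> s \<le> n then W a (s - 1) * W b (s - 1) else 0)"

text \<open>The tn \<times> tn block matrix whose (i,j) block is C_{l(i,j)}; global index r
  corresponds to block r div n and position r mod n within the block.\<close>
definition block_latin :: "nat \<Rightarrow> (nat \<Rightarrow> nat \<Rightarrow> int) \<Rightarrow> (nat \<Rightarrow> nat \<Rightarrow> nat) \<Rightarrow> nat \<Rightarrow> nat \<Rightarrow> int" where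
  "block_latin n W L r c = col_outer n W (L (r div n) (c div n)) (r mod n) (c mod n)"

end

theory Submission
  imports Defs "Jordan_Normal_Form.Determinant"
begin

lemma wm_cols:
  assumes wm: "weighing_matrix n k W" and i: "i < n" and j: "j < n"
  shows "(\<Sum>l<n. W l i * W l j) = (if i = j then k else 0)"
proof (cases "k = 0")
  case True
  have z: "W a b = 0" if "a < n" "b < n" for a b
  proof -
    have "(\<Sum>l<n. W a l * W a l) = 0" using wm that True unfolding weighing_matrix_def by auto
    hence "\<forall>l\<in>{..<n}. W a l * W a l = 0"
      by (subst sum_nonneg_eq_0_iff[symmetric]) auto
    thus ?thesis using that by auto
  qed
  show ?thesis using z i j True by simp
next
  case False
  define A where "A = mat n n (\<lambda>(i,j). rat_of_int (W i j))"
  define B where "B = mat n n (\<lambda>(i,j). rat_of_int (W j i) / of_int k)"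
  have Ac: "A \<in> carrier_mat n n" and Bc: "B \<in> carrier_mat n n" unfolding A_def B_def by auto
  have "A * B = 1\<^sub>m n"
  proof (rule eq_matI)
    fix a b assume ab: "a < dim_row (1\<^sub>m n)" "b < dim_col (1\<^sub>m n)"
    hence ab': "a < n" "b < n" by auto
    have "(A * B) $$ (a, b) = (\<Sum>l<n. rat_of_int (W a l) * (rat_of_int (W b l) / of_int k))"
      using ab' unfolding A_def B_def
      by (simp add: scalar_prod_def lessThan_atLeast0)
    also have "\<dots> = rat_of_int (\<Sum>l<n. W a l * W b l) / of_int k"
      by (simp add: sum_divide_distrib)
    also have "\<dots> = (if a = b then 1 else 0)" using wm ab' False unfolding weighing_matrix_def by auto
    finally show "(A * B) $$ (a, b) = 1\<^sub>m n $$ (a, b)" using ab' by simp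
  qed (auto simp: A_def B_def)
  hence BA: "B * A = 1\<^sub>m n" by (rule mat_mult_left_right_inverse[OF Ac Bc])
  have "(B * A) $$ (i, j) = (\<Sum>l<n. rat_of_int (W l i) / of_int k * rat_of_int (W l j))"
    using i j unfolding A_def B_def by (simp add: scalar_prod_def lessThan_atLeast0)
  also have "\<dots> = rat_of_int (\<Sum>l<n. W l i * W l j) / of_int k"
    by (simp add: sum_divide_distrib)
  finally have "rat_of_int (\<Sum>l<n. W l i * W l j) / of_int k = (if i = j then 1 else 0)"
    using BA i j by simp
  hence "rat_of_int (\<Sum>l<n. W l i * W l j) = rat_of_int (if i = j then k else 0)"
    using False by (auto simp: divide_eq_eq split: if_splits)
  thus ?thesis using of_int_eq_iff by blast
qed

lemma sum_add_split: "(\<Sum>c<a+n. (f::nat\<Rightarrow>int) c) = (\<Sum>c<a. f c) + (\<Sum>m<n. f (a+m))"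
  by (induction n) (auto simp: add.assoc)

lemma sum_blocks: "(\<Sum>c<t*n. (f::nat\<Rightarrow>int) c) = (\<Sum>j<t. \<Sum>m<n. f (j*n+m)::int)"
proof (induction t)
  case (Suc t)
  have "Suc t * n = t*n + n" by simp
  then show ?case using Suc by (simp only: sum_add_split sum.lessThan_Suc)
qed simp

lemma ex1_uniq: "\<exists>!x. P x \<Longrightarrow> P a \<Longrightarrow> P b \<Longrightarrow> a = b"
  by blast

lemma col_outer_in: "1 \<le> s \<Longrightarrow> s \<le> n \<Longrightarrow> col_outer n W s x y = W x (s-1) * W y (s-1)"
  by (simp add: col_outer_def)

theorem lemma3p2:
  fixes n t :: nat and k :: int
    and W :: "nat \<Rightarrow> nat \<Rightarrow> int" and L :: "nat \<Rightarrow> nat \<Rightarrow> nat"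
  assumes "weighing_matrix n k W"
    and "t \<ge> n"
    and "latin_square t L"
  shows "weighing_matrix (t * n) (k ^ 2) (block_latin n W L)"
proof -
  note wm = assms(1)
  note ls = assms(3)[unfolded latin_square_def]
  note Lr = conjunct1[OF ls, rule_format]
  note Lrow = conjunct1[OF conjunct2[OF ls], rule_format]
  note Lcol = conjunct2[OF conjunct2[OF ls], rule_format]
  note wd = wm[unfolded weighing_matrix_def]
  note Wv = conjunct1[OF wd, rule_format]
  note Wr = conjunct2[OF wd, rule_format]
  have prod3: "x * y \<in> {-1,0,1::int}" if "x \<in> {-1,0,1}" "y \<in> {-1,0,1}" for x y
    using that by auto
  show ?thesis unfolding weighing_matrix_def
  proof (intro conjI allI impI)
    fix r c assume r: "r < t*n" and c: "c < t*n"
    hence np: "n > 0" by (cases n) auto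
    have "r div n < t" "c div n < t" using r c np by (auto simp: div_less_iff_less_mult)
    hence s: "L (r div n) (c div n) \<in> {1..t}" using Lr by blast
    have bl: "block_latin n W L r c = (if L (r div n) (c div n) \<le> n then
        W (r mod n) (L (r div n) (c div n) - 1) * W (c mod n) (L (r div n) (c div n) - 1) else 0)"
      using s unfolding block_latin_def col_outer_def by auto
    show "block_latin n W L r c \<in> {-1,0,1}"
    proof (cases "L (r div n) (c div n) \<le> n")
      case True
      have "L (r div n) (c div n) - 1 < n" using True s by auto
      hence "W (r mod n) (L (r div n) (c div n) - 1) * W (c mod n) (L (r div n) (c div n) - 1) \<in> {-1,0,1}"
        using np by (intro prod3 Wv) auto
      thus ?thesis using True by (simp only: bl if_True)
    next
      case False
      thus ?thesis by (simp only: bl if_False) simp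
    qed
  next
    fix r r' assume r: "r < t*n" and r': "r' < t*n"
    hence np: "n > 0" by (cases n) auto
    define a where "a = r div n" define p where "p = r mod n"
    define b where "b = r' div n" define q where "q = r' mod n"
    have a: "a < t" and b: "b < t" using r r' np by (auto simp: a_def b_def div_less_iff_less_mult)
    have p: "p < n" and q: "q < n" using np by (auto simp: p_def q_def)
    have inner: "(\<Sum>m<n. block_latin n W L r (j*n+m) * block_latin n W L r' (j*n+m))
        = (if L a j = L b j \<and> 1 \<le> L a j \<and> L a j \<le> n
           then k * (W p (L a j - 1) * W q (L a j - 1)) else 0)" for j
    proof -
      have "(\<Sum>m<n. block_latin n W L r (j*n+m) * block_latin n W L r' (j*n+m))
          = (\<Sum>m<n. col_outer n W (L a j) p m * col_outer n W (L b j) q m)"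
      proof (intro sum.cong refl)
        fix m assume "m \<in> {..<n}"
        hence m: "m < n" by simp
        have d: "(j*n+m) div n = j" and md: "(j*n+m) mod n = m" using m np by simp_all
        show "block_latin n W L r (j*n+m) * block_latin n W L r' (j*n+m)
          = col_outer n W (L a j) p m * col_outer n W (L b j) q m"
          unfolding block_latin_def d md a_def b_def p_def q_def ..
      qed
      also have "\<dots> = (if 1 \<le> L a j \<and> L a j \<le> n \<and> 1 \<le> L b j \<and> L b j \<le> n then
            W p (L a j - 1) * W q (L b j - 1) * (\<Sum>m<n. W m (L a j - 1) * W m (L b j - 1)) else 0)"
      proof (cases "1 \<le> L a j \<and> L a j \<le> n \<and> 1 \<le> L b j \<and> L b j \<le> n")
        case True
        have "(\<Sum>m<n. col_outer n W (L a j) p m * col_outer n W (L b j) q m)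
          = (\<Sum>m<n. (W p (L a j - 1) * W q (L b j - 1)) * (W m (L a j - 1) * W m (L b j - 1)))"
        proof (intro sum.cong refl)
          fix m
          have "col_outer n W (L a j) p m = W p (L a j - 1) * W m (L a j - 1)"
            using True by (intro col_outer_in) auto
          moreover have "col_outer n W (L b j) q m = W q (L b j - 1) * W m (L b j - 1)"
            using True by (intro col_outer_in) auto
          ultimately show "col_outer n W (L a j) p m * col_outer n W (L b j) q m
            = (W p (L a j - 1) * W q (L b j - 1)) * (W m (L a j - 1) * W m (L b j - 1))"
            by (simp only: mult_ac)
        qed
        also have "\<dots> = W p (L a j - 1) * W q (L b j - 1) * (\<Sum>m<n. W m (L a j - 1) * W m (L b j - 1))"
          by (simp only: sum_distrib_left)
        finally show ?thesis using True by simp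
      next
        case False
        have "col_outer n W (L a j) p m * col_outer n W (L b j) q m = 0" for m
          using False unfolding col_outer_def by auto
        hence z: "(\<Sum>m<n. col_outer n W (L a j) p m * col_outer n W (L b j) q m) = 0"
          by (intro sum.neutral) blast
        show ?thesis by (simp only: if_not_P[OF False] z)
      qed
      also have "\<dots> = (if L a j = L b j \<and> 1 \<le> L a j \<and> L a j \<le> n
           then k * (W p (L a j - 1) * W q (L a j - 1)) else 0)"
      proof (cases "1 \<le> L a j \<and> L a j \<le> n \<and> 1 \<le> L b j \<and> L b j \<le> n")
        case True
        then have sm: "(\<Sum>m<n. W m (L a j - 1) * W m (L b j - 1)) = (if L a j - 1 = L b j - 1 then k else 0)"
          by (intro wm_cols[OF wm]) auto
        show ?thesis
        proof (cases "L a j = L b j")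
          case eq: True
          have c2: "L a j = L b j \<and> 1 \<le> L a j \<and> L a j \<le> n" using True eq by simp
          have "L a j - 1 = L b j - 1" using eq by simp
          hence "(\<Sum>m<n. W m (L a j - 1) * W m (L b j - 1)) = k" using sm by simp
          thus ?thesis unfolding if_P[OF True] if_P[OF c2] using eq by (simp add: mult_ac)
        next
          case ne: False
          have "L a j - 1 \<noteq> L b j - 1" using True ne by auto
          hence "(\<Sum>m<n. W m (L a j - 1) * W m (L b j - 1)) = 0" using sm by simp
          moreover have c3: "\<not> (L a j = L b j \<and> 1 \<le> L a j \<and> L a j \<le> n)" using ne by simp
          ultimately show ?thesis unfolding if_P[OF True] if_not_P[OF c3] by simp
        qed
      next
        case False
        have c4: "\<not> (L a j = L b j \<and> 1 \<le> L a j \<and> L a j \<le> n)" using False by auto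
        show ?thesis by (simp only: if_not_P[OF False] if_not_P[OF c4])
      qed
      finally show ?thesis .
    qed
    have "(\<Sum>l<t*n. block_latin n W L r l * block_latin n W L r' l)
        = (\<Sum>j<t. if L a j = L b j \<and> 1 \<le> L a j \<and> L a j \<le> n
           then k * (W p (L a j - 1) * W q (L a j - 1)) else 0)"
      by (simp only: sum_blocks inner)
    also have "\<dots> = (if r = r' then k^2 else 0)"
    proof (cases "a = b")
      case True
      have inj: "inj_on (L a) {..<t}"
      proof (rule inj_onI)
        fix x y assume x: "x \<in> {..<t}" and y: "y \<in> {..<t}" and e: "L a x = L a y"
        have x': "x < t" and y': "y < t" using x y by simp_all
        have u: "\<exists>!j. j < t \<and> L a j = L a x" by (rule Lrow[OF a Lr[OF a x']])
        show "x = y" by (rule ex1_uniq[OF u]) (use x' y' e in simp_all)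
      qed
      have "L a ` {..<t} \<subseteq> {1..t}" using Lr a by auto
      moreover have "card (L a ` {..<t}) = card {1..t}" using card_image[OF inj] by simp
      ultimately have img: "L a ` {..<t} = {1..t}" by (intro card_subset_eq) auto
      have "(\<Sum>j<t. if L a j = L b j \<and> 1 \<le> L a j \<and> L a j \<le> n
           then k * (W p (L a j - 1) * W q (L a j - 1)) else 0)
          = (\<Sum>j<t. (\<lambda>s. if 1 \<le> s \<and> s \<le> n then k * (W p (s - 1) * W q (s - 1)) else 0) (L a j))"
        using True by simp
      also have "\<dots> = (\<Sum>s\<in>{1..t}. if 1 \<le> s \<and> s \<le> n then k * (W p (s - 1) * W q (s - 1)) else 0)"
        using sum.reindex[OF inj, of "\<lambda>s. if 1 \<le> s \<and> s \<le> n then k * (W p (s - 1) * W q (s - 1)) else 0"]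
        img by simp
      also have "\<dots> = (\<Sum>s\<in>{1..n}. k * (W p (s - 1) * W q (s - 1)))"
        using assms(2) by (intro sum.mono_neutral_cong_right) auto
      also have "\<dots> = (\<Sum>l<n. k * (W p l * W q l))"
      proof -
        have "{1..n} = Suc ` {..<n}" by (simp add: image_Suc_lessThan)
        thus ?thesis by (simp add: sum.reindex)
      qed
      also have "\<dots> = k * (if p = q then k else 0)" using Wr p q by (simp add: sum_distrib_left[symmetric])
      also have "\<dots> = (if r = r' then k^2 else 0)"
      proof -
        have rr: "r = a*n+p" "r' = b*n+q" by (simp_all add: a_def b_def p_def q_def)
        have "(p = q) = (r = r')" using True rr unfolding p_def q_def by auto
        thus ?thesis by (simp add: power2_eq_square)
      qed
      finally show ?thesis .
    next
      case False
      have "L a j \<noteq> L b j" if j: "j < t" for j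
      proof
        assume e: "L a j = L b j"
        have u: "\<exists>!i. i < t \<and> L i j = L a j" using Lcol[OF j Lr[OF a j]] .
        have "a = b" by (rule ex1_uniq[OF u]) (use a b e in simp_all)
        thus False using False by simp
      qed
      moreover have "r \<noteq> r'" using False a_def b_def by auto
      ultimately show ?thesis by (auto intro!: sum.neutral)
    qed
    finally show "(\<Sum>l<t*n. block_latin n W L r l * block_latin n W L r' l) = (if r = r' then k^2 else 0)" .
  qed
qed

end
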